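(* Let $f:\mathbb{R}^n\to\mathbb{R}$, $g:\mathbb{R}^m\to\mathbb{R}$, $Q:\mathbb{R}^n\times\mathbb{R}^m\to\mathbb{R}\cup\{+\infty\}$ and $L(x,y)=f(x)+Q(x,y)+g(y)$ satisfy: (A1) $L$ is bounded below; $f,g$ are continuously differentiable with $\nabla f$, $\nabla g$ Lipschitz continuous with constants $L_{\nabla f}$, $L_{\nabla g}$; $Q$ is proper and lower semicontinuous; $\phi_1:\mathbb{R}^n\to\mathbb{R}$, $\phi_2:\mathbb{R}^m\to\mathbb{R}$ are differentiable, $\phi_i$ is $\theta_i$-strongly convex with $\theta_1>L_{\nabla f}$, $\theta_2>L_{\nabla g}$, and $\nabla\phi_i$ is $\eta_i$-Lipschitz continuous ($i=1,2$); (A2) $L$ is coercive and $\mathrm{dom}\,Q$ is closed; for all $(x,y)\in\mathrm{dom}\,Q$, $\partial_xQ(x,y)\times\partial_yQ(x,y)\subset\partial Q(x,y)$; and $Q(x,y)=q(x,y)+h(x)$, where $h:\mathbb{R}^n\to\mathbb{R}\cup\{+\infty\}$ is continuous on its domain, $q:\mathbb{R}^n\times\mathbb{R}^m\to\mathbb{R}\cup\{+\infty\}$ is continuous on $\mathrm{dom}\,Q$, for every $y$ the partial function $q(\cdot,y)$ is continuously differentiable, and for each bounded subset $D_1\times D_2\subset\mathrm{dom}\,Q$ there exists $\xi>0$ such that $\|\nabla_xq(\bar x,y)-\nabla_xq(\bar x,\bar y)\|\le\xi\|y-\bar y\|$ for all $\bar x\in D_1$, $y,\bar y\in D_2$. Let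 $\{(x_k,y_k)\}$ and $\{(\hat x_k,\hat y_k)\}$ be sequences generated by the following algorithm: choose $(x_0,y_0)\in\mathbb{R}^n\times\mathbb{R}^m$, set $(\hat x_0,\hat y_0)=(x_0,y_0)$, choose $\alpha_{\max},\beta_{\max}\ge0$ with $\alpha_{\max}+\beta_{\max}<1$ and $\alpha_k\in[0,\alpha_{\max}]$, $\beta_k\in[0,\beta_{\max}]$; for $k=0,1,\dots$: 1. $x_{k+1}\in\arg\min_{x}\{Q(x,\hat y_k)+\langle\nabla f(\hat x_k),x\rangle+D_{\phi_1}(x,\hat x_k)\}$, $y_{k+1}\in\arg\min_{y}\{Q(x_{k+1},y)+\langle\nabla g(\hat y_k),y\rangle+D_{\phi_2}(y,\hat y_k)\}$; 2. $u_{k+1}=x_{k+1}+\alpha_k(x_{k+1}-x_k)+\beta_k(x_k-x_{k-1})$, $v_{k+1}=y_{k+1}+\alpha_k(y_{k+1}-y_k)+\beta_k(y_k-y_{k-1})$; 3. if $L(u_{k+1},v_{k+1})\le L(x_{k+1},y_{k+1})$ then $(\hat x_{k+1},\hat y_{k+1})=(u_{k+1},v_{k+1})$, else $(\hat x_{k+1},\hat y_{k+1})=(x_{k+1},y_{k+1})$. For any integer $k\ge1$ set $q_x^{k+1}=\nabla f(x_{k+1})-\nabla f(\hat x_k)-\nabla\phi_1(x_{k+1})+\nabla\phi_1(\hat x_k)$, $p_x^{k+1}=\nabla_xq(x_{k+1},y_{k+1})-\nabla_xq(x_{k+1},\hat y_k)+q_x^{k+1}$, $p_y^{k+1}=\nabla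 g(y_{k+1})-\nabla g(\hat y_k)-\nabla\phi_2(y_{k+1})+\nabla\phi_2(\hat y_k)$. Then $(p_x^{k+1},p_y^{k+1})\in\partial L(x_{k+1},y_{k+1})$, and there exists $\varrho>0$ such that $\|(p_x^{k+1},p_y^{k+1})\|\le\varrho\|(x_{k+1}-\hat x_k,y_{k+1}-\hat y_k)\|$.
   Context: For a convex differentiable $\phi$, $D_\phi(x,y)=\phi(x)-\phi(y)-\langle\nabla\phi(y),x-y\rangle$ (Bregman distance). $\phi$ is $\theta$-strongly convex if $\phi-\frac\theta2\|\cdot\|^2$ is convex. For a proper lsc $F$, the Fréchet subdifferential $\hat\partial F(x)$ is the set of $v$ with $\liminf_{y\to x}\frac{F(y)-F(x)-\langle v,y-x\rangle}{\|y-x\|}\ge0$ (empty if $x\notin\mathrm{dom}F$), and the (limiting) subdifferential is $\partial F(x)=\{v:\exists x_k\to x, F(x_k)\to F(x), v_k\in\hat\partial F(x_k), v_k\to v\}$. $\partial_xQ(x,y)$ and $\partial_yQ(x,y)$ denote the limiting subdifferentials of $Q(\cdot,y)$ at $x$ and of $Q(x,\cdot)$ at $y$. $(x_{-1},y_{-1})$ in step 2 is a given initial point (e.g. $(x_0,y_0)$). *)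

theory Defs
  imports "HOL-Analysis.Analysis"
begin

text \<open>Extended-real valued functions on Euclidean spaces: values in ereal
  (the value +infinity encodes points outside the effective domain).\<close>

definition edom :: "('a \<Rightarrow> ereal) \<Rightarrow> 'a set" where
  "edom F = {x. F x < \<infinity>}"

definition proper_fun :: "('a \<Rightarrow> ereal) \<Rightarrow> bool" where
  "proper_fun F \<longleftrightarrow> (\<forall>x. F x \<noteq> -\<infinity>) \<and> (\<exists>x. F x < \<infinity>)"

definition lsc_fun :: "('a::topological_space \<Rightarrow> ereal) \<Rightarrow> bool" where
  "lsc_fun F \<longleftrightarrow> (\<forall>x. F x \<le> Liminf (at x) F)"

definition frechet_subdiff :: "('a::real_inner \<Rightarrow> ereal) \<Rightarrow> 'a \<Rightarrow> 'a set" where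
  "frechet_subdiff F x = {v. F x < \<infinity> \<and>
      Liminf (at x) (\<lambda>y. (F y - F x - ereal (inner v (y - x))) / ereal (norm (y - x))) \<ge> 0}"

definition limiting_subdiff :: "('a::real_inner \<Rightarrow> ereal) \<Rightarrow> 'a \<Rightarrow> 'a set" where
  "limiting_subdiff F x = {v. \<exists>xs vs. xs \<longlonglongrightarrow> x \<and> (\<lambda>k. F (xs k)) \<longlonglongrightarrow> F x \<and>
      (\<forall>k. vs k \<in> frechet_subdiff F (xs k)) \<and> vs \<longlonglongrightarrow> v}"

definition strongly_convex :: "real \<Rightarrow> ('a::real_normed_vector \<Rightarrow> real) \<Rightarrow> bool" where
  "strongly_convex \<theta> \<phi> \<longleftrightarrow> convex_on UNIV (\<lambda>x. \<phi> x - \<theta> / 2 * (norm x)\<^sup>2)"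

definition bregman :: "('a::real_inner \<Rightarrow> real) \<Rightarrow> ('a \<Rightarrow> 'a) \<Rightarrow> 'a \<Rightarrow> 'a \<Rightarrow> real" where
  "bregman \<phi> \<phi>' x y = \<phi> x - \<phi> y - inner (\<phi>' y) (x - y)"

end

theory Submission
  imports Defs
begin


lemma ereal_div_pt:
  fixes Fy :: ereal
  assumes n: "n > 0"
  shows "ereal c < (Fy - ereal r - ereal t) / ereal n \<longleftrightarrow> ereal (r + t + c * n) < Fy"
proof (cases Fy)
  case (real s)
  have "c < (s - r - t) / n \<longleftrightarrow> c * n < s - r - t" using n by (simp add: field_simps)
  then show ?thesis using real n by (simp add: algebra_simps)
qed (use n in auto)

lemma frechet_iff:
  fixes F :: "'a::real_inner \<Rightarrow> ereal"
  assumes Fx: "F x = ereal r"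
  shows "v \<in> frechet_subdiff F x \<longleftrightarrow>
    (\<forall>e>0. eventually (\<lambda>y. ereal (r + inner v (y - x) - e * norm (y - x)) \<le> F y) (at x))"
proof -
  have neq: "eventually (\<lambda>y. y \<noteq> x) (at x)" by (simp add: eventually_at_filter)
  have "v \<in> frechet_subdiff F x \<longleftrightarrow> (\<forall>z<0. eventually (\<lambda>y. z < (F y - F x - ereal (inner v (y - x))) / ereal (norm (y - x))) (at x))"
    unfolding frechet_subdiff_def using Fx by (simp add: le_Liminf_iff)
  also have "\<dots> \<longleftrightarrow> (\<forall>e>0. eventually (\<lambda>y. ereal (r + inner v (y - x) - e * norm (y - x)) \<le> F y) (at x))"
  proof safe
    fix e :: real assume e: "e > 0"
    assume H: "\<forall>z<0. eventually (\<lambda>y. z < (F y - F x - ereal (inner v (y - x))) / ereal (norm (y - x))) (at x)"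
    then have "eventually (\<lambda>y. ereal (-e) < (F y - F x - ereal (inner v (y - x))) / ereal (norm (y - x))) (at x)"
      using e by simp
    with neq show "eventually (\<lambda>y. ereal (r + inner v (y - x) - e * norm (y - x)) \<le> F y) (at x)"
    proof eventually_elim
      case (elim y)
      then have "norm (y - x) > 0" by simp
      with elim show ?case using ereal_div_pt[of "norm (y - x)" "-e" "F y" r "inner v (y - x)"] Fx
        by (simp add: algebra_simps)
    qed
  next
    fix z :: ereal assume z: "z < 0"
    assume H: "\<forall>e>0. eventually (\<lambda>y. ereal (r + inner v (y - x) - e * norm (y - x)) \<le> F y) (at x)"
    obtain c where c: "z < ereal c" "c < 0"
    proof (cases z)
      case (real w) then show ?thesis using that[of "w/2"] z by auto
    next
      case PInf then show ?thesis using z by auto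
    next
      case MInf then show ?thesis using that[of "-1"] by auto
    qed
    have "eventually (\<lambda>y. ereal (r + inner v (y - x) - (-c/2) * norm (y - x)) \<le> F y) (at x)"
      using H c by (metis neg_0_less_iff_less half_gt_zero)
    with neq show "eventually (\<lambda>y. z < (F y - F x - ereal (inner v (y - x))) / ereal (norm (y - x))) (at x)"
    proof eventually_elim
      case (elim y)
      then have n: "norm (y - x) > 0" by simp
      have "ereal (r + inner v (y - x) + c * norm (y - x)) < ereal (r + inner v (y - x) - (-c/2) * norm (y - x))"
        using n c by (simp add: mult_strict_right_mono_neg)
      with elim have "ereal (r + inner v (y - x) + c * norm (y - x)) < F y" by order
      then have "ereal c < (F y - F x - ereal (inner v (y - x))) / ereal (norm (y - x))"
        using ereal_div_pt[OF n] Fx by simp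
      then show ?case using c(1) by order
    qed
  qed
  finally show ?thesis .
qed

lemma frechet_add_smooth:
  fixes F :: "'a::real_inner \<Rightarrow> ereal"
  assumes v: "v \<in> frechet_subdiff F x" and Fx: "F x \<noteq> -\<infinity>"
    and G: "(G has_derivative (\<lambda>h. inner h g)) (at x)"
  shows "v + g \<in> frechet_subdiff (\<lambda>y. F y + ereal (G y)) x"
proof -
  from v have "F x < \<infinity>" by (simp add: frechet_subdiff_def)
  with Fx obtain r where r: "F x = ereal r" by (cases "F x") auto
  have r2: "F x + ereal (G x) = ereal (r + G x)" using r by simp
  have Gev: "\<forall>e>0. eventually (\<lambda>y. norm (G y - G x - inner (y - x) g) \<le> e * norm (y - x)) (at x)"
    using G unfolding has_derivative_within_alt2 by simp
  show ?thesis
    unfolding frechet_iff[where F="\<lambda>y. F y + ereal (G y)" and x=x and r="r + G x", OF r2]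
  proof safe
    fix e :: real assume e: "e > 0"
    have "eventually (\<lambda>y. ereal (r + inner v (y - x) - (e/2) * norm (y - x)) \<le> F y) (at x)"
    proof -
      have "e/2 > 0" using e by simp
      then show ?thesis using v unfolding frechet_iff[where F=F and x=x and r=r, OF r] by blast
    qed
    moreover have "eventually (\<lambda>y. norm (G y - G x - inner (y - x) g) \<le> (e/2) * norm (y - x)) (at x)"
      using Gev e by (meson half_gt_zero)
    ultimately show "eventually (\<lambda>y. ereal (r + G x + inner (v + g) (y - x) - e * norm (y - x)) \<le> F y + ereal (G y)) (at x)"
    proof eventually_elim
      case (elim y)
      have "G y \<ge> G x + inner (y - x) g - (e/2) * norm (y - x)"
        using elim(2) by (smt (verit) abs_le_D1 real_norm_def)
      then have "ereal (r + G x + inner (v + g) (y - x) - e * norm (y - x))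
          \<le> ereal (r + inner v (y - x) - (e/2) * norm (y - x)) + ereal (G y)"
        by (simp add: inner_add_left inner_add_right inner_commute)
      also have "\<dots> \<le> F y + ereal (G y)" using elim(1) by (rule add_right_mono)
      finally show ?case .
    qed
  qed
qed

lemma fermat_frechet:
  fixes F :: "'a::real_inner \<Rightarrow> ereal"
  assumes m: "is_arg_min F (\<lambda>_. True) x" and Fx: "F x = ereal r"
  shows "0 \<in> frechet_subdiff F x"
  unfolding frechet_iff[where F=F and x=x and r=r, OF Fx]
proof safe
  fix e :: real assume e: "e > 0"
  show "eventually (\<lambda>y. ereal (r + inner 0 (y - x) - e * norm (y - x)) \<le> F y) (at x)"
  proof (rule always_eventually, rule allI)
    fix y
    have "F x \<le> F y" using m by (simp add: is_arg_min_def not_less)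
    then show "ereal (r + inner 0 (y - x) - e * norm (y - x)) \<le> F y"
      using Fx e by (simp add: order_trans[OF _ \<open>F x \<le> F y\<close>])
  qed
qed

lemma frechet_limiting:
  assumes "v \<in> frechet_subdiff F x"
  shows "v \<in> limiting_subdiff F x"
  unfolding limiting_subdiff_def
  by (rule CollectI, rule exI[of _ "\<lambda>_. x"], rule exI[of _ "\<lambda>_. v"]) (use assms in auto)

lemma limiting_add_smooth:
  fixes F :: "'a::real_inner \<Rightarrow> ereal"
  assumes v: "v \<in> limiting_subdiff F x" and Fn: "\<And>y. F y \<noteq> -\<infinity>"
    and G: "\<And>y. (G has_derivative (\<lambda>h. inner h (G' y))) (at y)"
    and G'c: "isCont G' x"
  shows "v + G' x \<in> limiting_subdiff (\<lambda>y. F y + ereal (G y)) x"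
proof -
  from v obtain xs vs where xs: "xs \<longlonglongrightarrow> x" and Fxs: "(\<lambda>k. F (xs k)) \<longlonglongrightarrow> F x"
    and vs: "\<And>k. vs k \<in> frechet_subdiff F (xs k)" and vv: "vs \<longlonglongrightarrow> v"
    unfolding limiting_subdiff_def by blast
  have Gc: "isCont G y" for y using G[of y] by (rule has_derivative_continuous)
  have "(\<lambda>k. G (xs k)) \<longlonglongrightarrow> G x" using xs Gc[of x] by (simp add: isCont_tendsto_compose)
  then have "(\<lambda>k. ereal (G (xs k))) \<longlonglongrightarrow> ereal (G x)" by (rule tendsto_ereal)
  then have 1: "(\<lambda>k. F (xs k) + ereal (G (xs k))) \<longlonglongrightarrow> F x + ereal (G x)"
    using Fxs by (intro tendsto_add_ereal_general) auto
  have 2: "(\<lambda>k. vs k + G' (xs k)) \<longlonglongrightarrow> v + G' x"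
    using vv xs G'c by (intro tendsto_add) (auto simp: isCont_tendsto_compose)
  have 3: "vs k + G' (xs k) \<in> frechet_subdiff (\<lambda>y. F y + ereal (G y)) (xs k)" for k
    by (rule frechet_add_smooth[OF vs Fn G])
  show ?thesis unfolding limiting_subdiff_def
    apply (rule CollectI)
    apply (rule exI[of _ xs], rule exI[of _ "\<lambda>k. vs k + G' (xs k)"])
    using xs 1 2 3 by blast
qed


lemma line_deriv:
  fixes F :: "'a::real_inner \<Rightarrow> real"
  assumes G: "\<And>u. GDERIV F u :> F' u"
  shows "((\<lambda>t. F (a + t *\<^sub>R d)) has_real_derivative inner d (F' (a + t *\<^sub>R d))) (at t)"
proof -
  have l: "((\<lambda>t. a + t *\<^sub>R d) has_derivative (\<lambda>s. s *\<^sub>R d)) (at t)"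
    by (auto intro!: derivative_eq_intros)
  have "((\<lambda>t. F (a + t *\<^sub>R d)) has_derivative (\<lambda>s. inner (s *\<^sub>R d) (F' (a + t *\<^sub>R d)))) (at t)"
    using diff_chain_at[OF l, of F "\<lambda>h. inner h (F' (a + t *\<^sub>R d))"] G[of "a + t *\<^sub>R d"]
    by (simp add: gderiv_def o_def)
  then show ?thesis unfolding has_field_derivative_def
    by (rule has_derivative_eq_rhs) (auto simp: inner_commute)
qed

lemma descent:
  fixes F :: "'a::real_inner \<Rightarrow> real"
  assumes G: "\<And>u. GDERIV F u :> F' u" and lip: "C-lipschitz_on UNIV F'"
  shows "F b \<le> F a + inner (F' a) (b - a) + C / 2 * (norm (b - a))^2"
proof -
  define d where "d = b - a"
  define \<psi> where "\<psi> t = F (a + t *\<^sub>R d) - t * inner (F' a) d - C / 2 * t^2 * (norm d)^2" for t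
  have C0: "C \<ge> 0" using lip by (simp add: lipschitz_on_def)
  have "\<psi> 0 \<ge> \<psi> 1"
  proof (rule DERIV_nonpos_imp_nonincreasing[of 0 1 \<psi>])
    fix t :: real assume t: "0 \<le> t" "t \<le> 1"
    have D: "(\<psi> has_real_derivative (inner d (F' (a + t *\<^sub>R d)) - inner (F' a) d - C * t * (norm d)^2)) (at t)"
      unfolding \<psi>_def
      by (intro derivative_eq_intros line_deriv[OF G]) (auto simp: power2_eq_square intro: line_deriv[OF G])
    have "inner d (F' (a + t *\<^sub>R d)) - inner (F' a) d = inner d (F' (a + t *\<^sub>R d) - F' a)"
      by (simp add: inner_diff_right inner_commute)
    also have "\<dots> \<le> norm d * norm (F' (a + t *\<^sub>R d) - F' a)"
      by (rule order_trans[OF _ Cauchy_Schwarz_ineq2]) simp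
    also have "norm (F' (a + t *\<^sub>R d) - F' a) \<le> C * norm (t *\<^sub>R d)"
      using lip unfolding lipschitz_on_def dist_norm by (metis UNIV_I add_diff_cancel_left')
    then have "norm d * norm (F' (a + t *\<^sub>R d) - F' a) \<le> norm d * (C * norm (t *\<^sub>R d))"
      by (simp add: mult_left_mono)
    also have "\<dots> = C * t * (norm d)^2" using t by (simp add: power2_eq_square)
    finally show "\<exists>y. (\<psi> has_real_derivative y) (at t) \<and> y \<le> 0"
      using D by (intro exI[of _ "inner d (F' (a + t *\<^sub>R d)) - inner (F' a) d - C * t * (norm d)^2"]) auto
  qed simp
  then show ?thesis unfolding \<psi>_def d_def by (simp add: algebra_simps)
qed

lemma bregman_lb:
  fixes \<phi> :: "'a::real_inner \<Rightarrow> real"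
  assumes G: "\<And>u. GDERIV \<phi> u :> \<phi>' u" and sc: "strongly_convex \<theta> \<phi>"
  shows "\<theta> / 2 * (norm (b - a))^2 \<le> bregman \<phi> \<phi>' b a"
proof -
  define d where "d = b - a"
  define \<psi> where "\<psi> x = \<phi> x - \<theta> / 2 * (norm x)^2" for x
  define \<gamma> where "\<gamma> t = \<psi> (a + t *\<^sub>R d)" for t
  have cv: "convex_on UNIV \<psi>" using sc unfolding strongly_convex_def \<psi>_def by simp
  have cg: "convex_on UNIV \<gamma>"
    unfolding convex_on_def
  proof safe
    fix s t u v :: real assume uv: "0 \<le> u" "0 \<le> v" "u + v = 1"
    have e: "a + (u *\<^sub>R s + v *\<^sub>R t) *\<^sub>R d = u *\<^sub>R (a + s *\<^sub>R d) + v *\<^sub>R (a + t *\<^sub>R d)"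
    proof -
      have "u *\<^sub>R (a + s *\<^sub>R d) + v *\<^sub>R (a + t *\<^sub>R d) = (u + v) *\<^sub>R a + (u * s + v * t) *\<^sub>R d"
        by (simp add: algebra_simps)
      then show ?thesis using uv by simp
    qed
    show "\<gamma> (u *\<^sub>R s + v *\<^sub>R t) \<le> u * \<gamma> s + v * \<gamma> t"
      unfolding \<gamma>_def e using cv uv unfolding convex_on_def by blast
  qed simp
  have ge: "\<gamma> t = \<phi> (a + t *\<^sub>R d) - \<theta> / 2 * ((norm a)^2 + 2 * t * inner a d + t^2 * (norm d)^2)" for t
  proof -
    have "(norm (a + t *\<^sub>R d))^2 = (norm a)^2 + 2 * t * inner a d + t^2 * (norm d)^2"
      unfolding power2_norm_eq_inner by (simp add: inner_add_left inner_add_right inner_commute power2_eq_square algebra_simps)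
    then show ?thesis unfolding \<gamma>_def \<psi>_def by simp
  qed
  have D: "(\<gamma> has_real_derivative (inner d (\<phi>' a) - \<theta> * inner a d)) (at 0)"
  proof -
    have L: "((\<lambda>t. \<phi> (a + t *\<^sub>R d)) has_real_derivative inner d (\<phi>' a)) (at 0)"
      using line_deriv[OF G, of a d 0] by simp
    have P: "((\<lambda>t. \<theta> / 2 * ((norm a)^2 + 2 * t * inner a d + t^2 * (norm d)^2)) has_real_derivative \<theta> * inner a d) (at 0)"
      by (auto intro!: derivative_eq_intros)
    show ?thesis unfolding ge[abs_def] using DERIV_diff[OF L P] by simp
  qed
  have "\<gamma> 1 - \<gamma> 0 \<ge> (inner d (\<phi>' a) - \<theta> * inner a d) * (1 - 0)"
    by (rule convex_on_imp_above_tangent[OF cg]) (use D in \<open>auto simp: has_field_derivative_at_within\<close>)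
  then show ?thesis unfolding ge bregman_def d_def
    by (simp add: inner_commute algebra_simps)
qed


lemma ereal_shift:
  fixes A B :: ereal
  assumes "A + ereal c \<le> B + ereal d" "e - c \<le> e' - d"
  shows "A + ereal e \<le> B + ereal e'"
  using assms by (cases A; cases B) auto

lemma ereal_cancel: "(A :: ereal) + ereal c + ereal (- c) = A"
  by (cases A) auto


theorem lemma3p2:
  fixes f :: "'a::euclidean_space \<Rightarrow> real" and f' :: "'a \<Rightarrow> 'a"
    and g :: "'b::euclidean_space \<Rightarrow> real" and g' :: "'b \<Rightarrow> 'b"
    and Q :: "'a \<times> 'b \<Rightarrow> ereal" and L :: "'a \<times> 'b \<Rightarrow> ereal"
    and q :: "'a \<Rightarrow> 'b \<Rightarrow> real" and qx :: "'a \<Rightarrow> 'b \<Rightarrow> 'a"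
    and h :: "'a \<Rightarrow> ereal"
    and \<phi>1 :: "'a \<Rightarrow> real" and \<phi>1' :: "'a \<Rightarrow> 'a"
    and \<phi>2 :: "'b \<Rightarrow> real" and \<phi>2' :: "'b \<Rightarrow> 'b"
    and Lf Lg \<theta>1 \<theta>2 \<eta>1 \<eta>2 :: real
    and x xh px :: "nat \<Rightarrow> 'a" and y yh py :: "nat \<Rightarrow> 'b"
    and xm1 :: 'a and ym1 :: 'b
    and \<alpha> \<beta> :: "nat \<Rightarrow> real" and \<alpha>max \<beta>max :: real
  assumes L_def: "\<And>u v. L (u, v) = ereal (f u) + Q (u, v) + ereal (g v)"
    \<comment> \<open>(A1)\<close>
    and L_bdd_below: "\<exists>c::real. \<forall>p. ereal c \<le> L p"
    and f_grad: "\<And>u. GDERIV f u :> f' u" and f'_cont: "continuous_on UNIV f'"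
    and g_grad: "\<And>v. GDERIV g v :> g' v" and g'_cont: "continuous_on UNIV g'"
    and f'_lip: "Lf-lipschitz_on UNIV f'" and g'_lip: "Lg-lipschitz_on UNIV g'"
    and Q_proper: "proper_fun Q" and Q_lsc: "lsc_fun Q"
    and \<phi>1_grad: "\<And>u. GDERIV \<phi>1 u :> \<phi>1' u"
    and \<phi>2_grad: "\<And>v. GDERIV \<phi>2 v :> \<phi>2' v"
    and \<phi>1_sc: "strongly_convex \<theta>1 \<phi>1" and \<phi>2_sc: "strongly_convex \<theta>2 \<phi>2"
    and \<theta>1_gt: "\<theta>1 > Lf" and \<theta>2_gt: "\<theta>2 > Lg"
    and \<phi>1'_lip: "\<eta>1-lipschitz_on UNIV \<phi>1'" and \<phi>2'_lip: "\<eta>2-lipschitz_on UNIV \<phi>2'"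
    \<comment> \<open>(A2)\<close>
    and L_coercive: "(L \<longlongrightarrow> \<infinity>) at_infinity"
    and domQ_closed: "closed (edom Q)"
    and Q_partial_subdiff: "\<And>u v. (u, v) \<in> edom Q \<Longrightarrow>
        limiting_subdiff (\<lambda>u'. Q (u', v)) u \<times> limiting_subdiff (\<lambda>v'. Q (u, v')) v
          \<subseteq> limiting_subdiff Q (u, v)"
    and Q_split: "\<And>u v. Q (u, v) = ereal (q u v) + h u"
    and h_cont: "continuous_on (edom h) h"
    and q_cont: "continuous_on (edom Q) (\<lambda>p. q (fst p) (snd p))"
    and q_grad: "\<And>u v. GDERIV (\<lambda>u'. q u' v) u :> qx u v"
    and qx_cont: "\<And>v. continuous_on UNIV (\<lambda>u. qx u v)"
    and qx_lip: "\<And>D1 D2. bounded (D1 \<times> D2) \<Longrightarrow> D1 \<times> D2 \<subseteq> edom Q \<Longrightarrow>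
        \<exists>\<xi>>0. \<forall>xb\<in>D1. \<forall>v\<in>D2. \<forall>vb\<in>D2. norm (qx xb v - qx xb vb) \<le> \<xi> * norm (v - vb)"
    \<comment> \<open>algorithm parameters\<close>
    and \<alpha>max_nonneg: "\<alpha>max \<ge> 0" and \<beta>max_nonneg: "\<beta>max \<ge> 0"
    and \<alpha>\<beta>max: "\<alpha>max + \<beta>max < 1"
    and \<alpha>_range: "\<And>k. \<alpha> k \<in> {0..\<alpha>max}" and \<beta>_range: "\<And>k. \<beta> k \<in> {0..\<beta>max}"
    \<comment> \<open>algorithm iterates; xm1, ym1 play the role of x_{-1}, y_{-1}\<close>
    and init: "xh 0 = x 0" "yh 0 = y 0"
    and step_x: "\<And>k. is_arg_min
        (\<lambda>u. Q (u, yh k) + ereal (inner (f' (xh k)) u + bregman \<phi>1 \<phi>1' u (xh k)))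
        (\<lambda>_. True) (x (Suc k))"
    and step_y: "\<And>k. is_arg_min
        (\<lambda>v. Q (x (Suc k), v) + ereal (inner (g' (yh k)) v + bregman \<phi>2 \<phi>2' v (yh k)))
        (\<lambda>_. True) (y (Suc k))"
    and step_extra: "\<And>k.
        let xp = (if k = 0 then xm1 else x (k - 1));
            yp = (if k = 0 then ym1 else y (k - 1));
            u = x (Suc k) + \<alpha> k *\<^sub>R (x (Suc k) - x k) + \<beta> k *\<^sub>R (x k - xp);
            v = y (Suc k) + \<alpha> k *\<^sub>R (y (Suc k) - y k) + \<beta> k *\<^sub>R (y k - yp)
        in (xh (Suc k), yh (Suc k)) =
             (if L (u, v) \<le> L (x (Suc k), y (Suc k)) then (u, v) else (x (Suc k), y (Suc k)))"
    \<comment> \<open>the vectors p_x^{k+1}, p_y^{k+1}\<close>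
    and px_def: "\<And>k. k \<ge> 1 \<Longrightarrow> px (Suc k) =
        qx (x (Suc k)) (y (Suc k)) - qx (x (Suc k)) (yh k)
        + (f' (x (Suc k)) - f' (xh k) - \<phi>1' (x (Suc k)) + \<phi>1' (xh k))"
    and py_def: "\<And>k. k \<ge> 1 \<Longrightarrow> py (Suc k) =
        g' (y (Suc k)) - g' (yh k) - \<phi>2' (y (Suc k)) + \<phi>2' (yh k)"
  shows "(\<forall>k\<ge>1. (px (Suc k), py (Suc k)) \<in> limiting_subdiff L (x (Suc k), y (Suc k)))
    \<and> (\<exists>\<rho>>0. \<forall>k\<ge>1. norm (px (Suc k), py (Suc k))
          \<le> \<rho> * norm (x (Suc k) - xh k, y (Suc k) - yh k))"
proof -
  have Qn: "\<And>p. Q p \<noteq> -\<infinity>" using Q_proper unfolding proper_fun_def by (metis prod.collapse)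
  have hn: "\<And>u. h u \<noteq> -\<infinity>"
  proof -
    fix u show "h u \<noteq> -\<infinity>" using Qn[of "(u, undefined)"] Q_split[of u undefined] by auto
  qed
  have QQ: "\<And>u v. Q (u, v) < \<infinity> \<longleftrightarrow> h u < \<infinity>"
    unfolding Q_split by (case_tac "h u") auto
  obtain p0 where p0: "Q p0 < \<infinity>" using Q_proper by (auto simp: proper_fun_def)
  have hp0: "h (fst p0) < \<infinity>" using p0 QQ[of "fst p0" "snd p0"] by simp
  define Gx where "Gx k u = inner (f' (xh k)) u + bregman \<phi>1 \<phi>1' u (xh k)" for k u
  define Gy where "Gy k v = inner (g' (yh k)) v + bregman \<phi>2 \<phi>2' v (yh k)" for k v
  have minx: "is_arg_min (\<lambda>u. Q (u, yh k) + ereal (Gx k u)) (\<lambda>_. True) (x (Suc k))" for k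
    using step_x[of k] unfolding Gx_def .
  have miny: "is_arg_min (\<lambda>v. Q (x (Suc k), v) + ereal (Gy k v)) (\<lambda>_. True) (y (Suc k))" for k
    using step_y[of k] unfolding Gy_def .
  have minx_le: "Q (x (Suc k), yh k) + ereal (Gx k (x (Suc k))) \<le> Q (u, yh k) + ereal (Gx k u)" for k u
    using minx[of k] by (simp add: is_arg_min_def not_less)
  have miny_le: "Q (x (Suc k), y (Suc k)) + ereal (Gy k (y (Suc k))) \<le> Q (x (Suc k), v) + ereal (Gy k v)" for k v
    using miny[of k] by (simp add: is_arg_min_def not_less)
  have hfin: "h (x (Suc k)) < \<infinity>" for k
  proof -
    have "Q (fst p0, yh k) < \<infinity>" using hp0 QQ by simp
    then have "Q (fst p0, yh k) + ereal (Gx k (fst p0)) < \<infinity>" by simp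
    with minx_le[of k "fst p0"] have "Q (x (Suc k), yh k) + ereal (Gx k (x (Suc k))) < \<infinity>" by order
    then have "Q (x (Suc k), yh k) < \<infinity>" by auto
    then show ?thesis using QQ by simp
  qed
  have Qfin: "Q (x (Suc k), v) < \<infinity>" for k v using hfin QQ by simp
  have Lform: "L (u, v) = Q (u, v) + ereal (f u + g v)" for u v
    unfolding L_def by (cases "Q (u, v)") auto
  have Lfun: "L = (\<lambda>p. Q p + ereal (f (fst p) + g (snd p)))"
  proof
    fix p show "L p = Q p + ereal (f (fst p) + g (snd p))" by (cases p) (simp add: Lform)
  qed

  have Gx_d: "(Gx k has_derivative (\<lambda>h. inner h (f' (xh k) + \<phi>1' u - \<phi>1' (xh k)))) (at u)" for k u
  proof -
    have "((\<lambda>u. inner (f' (xh k)) u + (\<phi>1 u - \<phi>1 (xh k) - inner (\<phi>1' (xh k)) (u - xh k))) has_derivative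
       (\<lambda>h. inner (f' (xh k)) h + (inner h (\<phi>1' u) - 0 - inner (\<phi>1' (xh k)) (h - 0)))) (at u)"
      by (intro derivative_intros \<phi>1_grad[unfolded gderiv_def])
    then show ?thesis unfolding Gx_def bregman_def
      by (rule has_derivative_eq_rhs) (auto simp: inner_add_right inner_diff_right inner_commute)
  qed
  have Gy_d: "(Gy k has_derivative (\<lambda>h. inner h (g' (yh k) + \<phi>2' v - \<phi>2' (yh k)))) (at v)" for k v
  proof -
    have "((\<lambda>v. inner (g' (yh k)) v + (\<phi>2 v - \<phi>2 (yh k) - inner (\<phi>2' (yh k)) (v - yh k))) has_derivative
       (\<lambda>h. inner (g' (yh k)) h + (inner h (\<phi>2' v) - 0 - inner (\<phi>2' (yh k)) (h - 0)))) (at v)"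
      by (intro derivative_intros \<phi>2_grad[unfolded gderiv_def])
    then show ?thesis unfolding Gy_def bregman_def
      by (rule has_derivative_eq_rhs) (auto simp: inner_add_right inner_diff_right inner_commute)
  qed

  have subd: "(px (Suc k), py (Suc k)) \<in> limiting_subdiff L (x (Suc k), y (Suc k))" if k1: "k \<ge> 1" for k
  proof -
    define a where "a = x (Suc k)"
    define b where "b = y (Suc k)"
    define vx where "vx = - (f' (xh k) + \<phi>1' a - \<phi>1' (xh k)) + (qx a b - qx a (yh k))"
    define vy where "vy = - (g' (yh k) + \<phi>2' b - \<phi>2' (yh k))"
    have Qa: "Q (a, yh k) \<noteq> \<infinity>" "Q (a, yh k) \<noteq> -\<infinity>" using Qfin Qn unfolding a_def by auto
    then obtain r where r: "Q (a, yh k) + ereal (Gx k a) = ereal r" by (cases "Q (a, yh k)") auto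
    have "0 \<in> frechet_subdiff (\<lambda>u. Q (u, yh k) + ereal (Gx k u)) a"
      using fermat_frechet[where F="\<lambda>u. Q (u, yh k) + ereal (Gx k u)" and x=a and r=r] minx[of k] r
      unfolding a_def by simp
    then have "0 + - (f' (xh k) + \<phi>1' a - \<phi>1' (xh k)) \<in>
        frechet_subdiff (\<lambda>u. Q (u, yh k) + ereal (Gx k u) + ereal (- Gx k u)) a"
    proof (rule frechet_add_smooth)
      show "((\<lambda>u. - Gx k u) has_derivative (\<lambda>h. inner h (- (f' (xh k) + \<phi>1' a - \<phi>1' (xh k))))) (at a)"
        using has_derivative_minus[OF Gx_d[of k a]] by (simp only: inner_minus_right)
    qed (use r in auto)
    then have "- (f' (xh k) + \<phi>1' a - \<phi>1' (xh k)) \<in> frechet_subdiff (\<lambda>u. Q (u, yh k)) a"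
      by (simp add: ereal_cancel)
    then have "- (f' (xh k) + \<phi>1' a - \<phi>1' (xh k)) + (qx a b - qx a (yh k)) \<in>
        frechet_subdiff (\<lambda>u. Q (u, yh k) + ereal (q u b - q u (yh k))) a"
    proof (rule frechet_add_smooth)
      show "Q (a, yh k) \<noteq> -\<infinity>" by (rule Qa(2))
      show "((\<lambda>u. q u b - q u (yh k)) has_derivative (\<lambda>h. inner h (qx a b - qx a (yh k)))) (at a)"
        using has_derivative_diff[OF q_grad[of b a, unfolded gderiv_def] q_grad[of "yh k" a, unfolded gderiv_def]]
        by (simp add: inner_diff_right)
    qed
    moreover have "(\<lambda>u. Q (u, yh k) + ereal (q u b - q u (yh k))) = (\<lambda>u. Q (u, b))"
    proof
      fix u show "Q (u, yh k) + ereal (q u b - q u (yh k)) = Q (u, b)"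
        unfolding Q_split by (cases "h u") auto
    qed
    ultimately have vxf: "vx \<in> frechet_subdiff (\<lambda>u. Q (u, b)) a" unfolding vx_def by simp
    have Qb: "Q (a, b) \<noteq> \<infinity>" "Q (a, b) \<noteq> -\<infinity>" using Qfin Qn unfolding a_def by auto
    then obtain s where s: "Q (a, b) + ereal (Gy k b) = ereal s" by (cases "Q (a, b)") auto
    have "0 \<in> frechet_subdiff (\<lambda>v. Q (a, v) + ereal (Gy k v)) b"
      using fermat_frechet[where F="\<lambda>v. Q (a, v) + ereal (Gy k v)" and x=b and r=s] miny[of k] s
      unfolding a_def b_def by simp
    then have "0 + - (g' (yh k) + \<phi>2' b - \<phi>2' (yh k)) \<in>
        frechet_subdiff (\<lambda>v. Q (a, v) + ereal (Gy k v) + ereal (- Gy k v)) b"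
    proof (rule frechet_add_smooth)
      show "((\<lambda>v. - Gy k v) has_derivative (\<lambda>h. inner h (- (g' (yh k) + \<phi>2' b - \<phi>2' (yh k))))) (at b)"
        using has_derivative_minus[OF Gy_d[of k b]] by (simp only: inner_minus_right)
    qed (use s in auto)
    then have vyf: "vy \<in> frechet_subdiff (\<lambda>v. Q (a, v)) b"
      unfolding vy_def by (simp add: ereal_cancel)
    have dom: "(a, b) \<in> edom Q" using Qb by (simp add: edom_def less_le)
    have vQ: "(vx, vy) \<in> limiting_subdiff Q (a, b)"
      using Q_partial_subdiff[OF dom] frechet_limiting[OF vxf] frechet_limiting[OF vyf] by blast
    have Gd: "((\<lambda>p. f (fst p) + g (snd p)) has_derivative (\<lambda>h. inner h (f' (fst p), g' (snd p)))) (at p)"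
      for p :: "'a \<times> 'b"
    proof -
      have 1: "((\<lambda>p. f (fst p)) has_derivative (\<lambda>h. inner (fst h) (f' (fst p)))) (at p)"
        using diff_chain_at[OF has_derivative_fst[OF has_derivative_ident] f_grad[of "fst p", unfolded gderiv_def]]
        by (simp add: o_def)
      have 2: "((\<lambda>p. g (snd p)) has_derivative (\<lambda>h. inner (snd h) (g' (snd p)))) (at p)"
        using diff_chain_at[OF has_derivative_snd[OF has_derivative_ident] g_grad[of "snd p", unfolded gderiv_def]]
        by (simp add: o_def)
      show ?thesis using has_derivative_add[OF 1 2]
        by (rule has_derivative_eq_rhs) (auto simp: inner_prod_def)
    qed
    have Gc: "isCont (\<lambda>p. (f' (fst p), g' (snd p))) (a, b)"
    proof -
      have "continuous_on UNIV (\<lambda>p::'a \<times> 'b. (f' (fst p), g' (snd p)))"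
        by (intro continuous_on_Pair continuous_on_compose2[OF f'_cont] continuous_on_compose2[OF g'_cont]
              continuous_intros) auto
      then show ?thesis by (simp add: continuous_on_eq_continuous_at)
    qed
    have "(vx, vy) + (f' (fst (a, b)), g' (snd (a, b))) \<in> limiting_subdiff (\<lambda>p. Q p + ereal (f (fst p) + g (snd p))) (a, b)"
      by (rule limiting_add_smooth[OF vQ Qn Gd Gc])
    moreover have "(vx, vy) + (f' (fst (a, b)), g' (snd (a, b))) = (px (Suc k), py (Suc k))"
    proof -
      have "vx + f' a = px (Suc k)" unfolding px_def[OF k1] vx_def a_def b_def
        by (simp add: algebra_simps)
      moreover have "vy + g' b = py (Suc k)" unfolding py_def[OF k1] vy_def b_def
        by (simp add: algebra_simps)
      ultimately show ?thesis by simp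
    qed
    ultimately show ?thesis unfolding Lfun a_def b_def by simp
  qed

  have desc: "L (x (Suc k), y (Suc k)) \<le> L (xh k, yh k)" for k
  proof -
    define a where "a = x (Suc k)"
    define b where "b = y (Suc k)"
    have fdesc: "f a \<le> f (xh k) + inner (f' (xh k)) (a - xh k) + Lf / 2 * (norm (a - xh k))^2"
      by (rule descent[OF f_grad f'_lip])
    have bx: "\<theta>1 / 2 * (norm (a - xh k))^2 \<le> bregman \<phi>1 \<phi>1' a (xh k)"
      by (rule bregman_lb[OF \<phi>1_grad \<phi>1_sc])
    have "Lf / 2 * (norm (a - xh k))^2 \<le> \<theta>1 / 2 * (norm (a - xh k))^2"
      using \<theta>1_gt by (intro mult_right_mono) auto
    with fdesc bx have fx: "f a - Gx k a \<le> f (xh k) - Gx k (xh k)"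
      unfolding Gx_def by (simp add: bregman_def inner_diff_right)
    have gdesc: "g b \<le> g (yh k) + inner (g' (yh k)) (b - yh k) + Lg / 2 * (norm (b - yh k))^2"
      by (rule descent[OF g_grad g'_lip])
    have by': "\<theta>2 / 2 * (norm (b - yh k))^2 \<le> bregman \<phi>2 \<phi>2' b (yh k)"
      by (rule bregman_lb[OF \<phi>2_grad \<phi>2_sc])
    have "Lg / 2 * (norm (b - yh k))^2 \<le> \<theta>2 / 2 * (norm (b - yh k))^2"
      using \<theta>2_gt by (intro mult_right_mono) auto
    with gdesc by' have gy: "g b - Gy k b \<le> g (yh k) - Gy k (yh k)"
      unfolding Gy_def by (simp add: bregman_def inner_diff_right)
    have 1: "Q (a, b) + ereal (f a + g b) \<le> Q (a, yh k) + ereal (f a + g (yh k))"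
      by (rule ereal_shift[OF miny_le[of k "yh k", folded a_def b_def]]) (use gy in simp)
    have 2: "Q (a, yh k) + ereal (f a + g (yh k)) \<le> Q (xh k, yh k) + ereal (f (xh k) + g (yh k))"
      by (rule ereal_shift[OF minx_le[of k "xh k", folded a_def]]) (use fx in simp)
    show ?thesis using 1 2 unfolding Lform a_def b_def by order
  qed
  have extra: "L (xh (Suc k), yh (Suc k)) \<le> L (x (Suc k), y (Suc k))" for k
    using step_extra[of k] by (auto simp: Let_def split: if_splits)
  have L1fin: "L (x 1, y 1) < \<infinity>"
    using Qfin[of 0 "y 1"] unfolding Lform by simp
  then obtain M where M: "L (x 1, y 1) \<le> ereal M"
    by (cases "L (x 1, y 1)") auto
  have levels: "L (x k, y k) \<le> ereal M \<and> L (xh k, yh k) \<le> ereal M" if "k \<ge> 1" for k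
    using that
  proof (induction k rule: dec_induct)
    case base
    then show ?case using M extra[of 0] by simp
  next
    case (step k)
    then have "L (xh k, yh k) \<le> ereal M" by simp
    then have "L (x (Suc k), y (Suc k)) \<le> ereal M" using desc[of k] by order
    then show ?case using extra[of k] by (meson order_trans)
  qed
  obtain R where R: "\<And>p. L p \<le> ereal M \<Longrightarrow> norm p \<le> R"
  proof -
    have "eventually (\<lambda>p. ereal M < L p) at_infinity"
      using L_coercive by (simp add: tendsto_PInfty)
    then obtain R where "\<And>p. R \<le> norm p \<Longrightarrow> ereal M < L p"
      unfolding eventually_at_infinity by blast
    then show ?thesis using that[of R] by (meson linorder_not_le order_less_imp_le)
  qed
  define D1 where "D1 = x ` {1..}"
  define D2 where "D2 = y ` {1..} \<union> yh ` {1..}"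
  have nx: "norm (x k) \<le> R" "norm (y k) \<le> R" "norm (yh k) \<le> R" if "k \<ge> 1" for k
  proof -
    have "norm (x k, y k) \<le> R" "norm (xh k, yh k) \<le> R" using levels[OF that] R by auto
    then show "norm (x k) \<le> R" "norm (y k) \<le> R" "norm (yh k) \<le> R"
      using norm_fst_le[of "x k" "y k"] norm_snd_le[of "y k" "x k"] norm_snd_le[of "yh k" "xh k"] by linarith+
  qed
  have bD1: "bounded D1" unfolding D1_def bounded_iff
    by (rule exI[of _ R]) (auto intro: nx)
  have bD2: "bounded D2" unfolding D2_def bounded_iff
    by (rule exI[of _ R]) (auto intro: nx)
  have sub: "D1 \<times> D2 \<subseteq> edom Q"
  proof safe
    fix u v assume "u \<in> D1" "v \<in> D2"
    then obtain j where "j \<ge> 1" "u = x j" unfolding D1_def by auto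
    then have "u = x (Suc (j - 1))" by simp
    then show "(u, v) \<in> edom Q" using Qfin unfolding edom_def by simp
  qed
  obtain \<xi> where \<xi>: "\<xi> > 0" and
    xil: "\<And>xb v vb. xb \<in> D1 \<Longrightarrow> v \<in> D2 \<Longrightarrow> vb \<in> D2 \<Longrightarrow> norm (qx xb v - qx xb vb) \<le> \<xi> * norm (v - vb)"
    using qx_lip[OF bounded_Times[OF bD1 bD2] sub] by blast
  have Lf0: "Lf \<ge> 0" using f'_lip by (simp add: lipschitz_on_def)
  have Lg0: "Lg \<ge> 0" using g'_lip by (simp add: lipschitz_on_def)
  have e10: "\<eta>1 \<ge> 0" using \<phi>1'_lip by (simp add: lipschitz_on_def)
  have e20: "\<eta>2 \<ge> 0" using \<phi>2'_lip by (simp add: lipschitz_on_def)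
  have lipD: "norm (F a - F b) \<le> C * norm (a - b)" if "C-lipschitz_on UNIV F" for C F a b
    using that unfolding lipschitz_on_def dist_norm by blast
  define \<rho> where "\<rho> = \<xi> + Lf + \<eta>1 + Lg + \<eta>2 + 1"
  have bound: "norm (px (Suc k), py (Suc k)) \<le> \<rho> * norm (x (Suc k) - xh k, y (Suc k) - yh k)"
    if k1: "k \<ge> 1" for k
  proof -
    define a where "a = x (Suc k)"
    define b where "b = y (Suc k)"
    define N where "N = norm (a - xh k, b - yh k)"
    have dx: "norm (a - xh k) \<le> N" unfolding N_def by (rule norm_fst_le)
    have dy: "norm (b - yh k) \<le> N" unfolding N_def by (rule norm_snd_le)
    have aD1: "a \<in> D1" unfolding a_def D1_def by auto
    have bD2: "b \<in> D2" unfolding b_def D2_def by auto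
    have yD2: "yh k \<in> D2" unfolding D2_def using k1 by auto
    have "norm (px (Suc k)) \<le> norm (qx a b - qx a (yh k)) + (norm (f' a - f' (xh k)) + norm (\<phi>1' a - \<phi>1' (xh k)))"
    proof -
      have eq: "px (Suc k) = (qx a b - qx a (yh k)) + ((f' a - f' (xh k)) - (\<phi>1' a - \<phi>1' (xh k)))"
        unfolding px_def[OF k1] a_def b_def by (simp add: algebra_simps)
      show ?thesis unfolding eq
        using norm_triangle_ineq[of "qx a b - qx a (yh k)" "(f' a - f' (xh k)) - (\<phi>1' a - \<phi>1' (xh k))"]
          norm_triangle_ineq4[of "f' a - f' (xh k)" "\<phi>1' a - \<phi>1' (xh k)"] by linarith
    qed
    also have "\<dots> \<le> \<xi> * norm (b - yh k) + (Lf * norm (a - xh k) + \<eta>1 * norm (a - xh k))"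
      using xil[OF aD1 bD2 yD2] lipD[OF f'_lip, of a "xh k"] lipD[OF \<phi>1'_lip, of a "xh k"] by linarith
    also have "\<dots> \<le> \<xi> * N + (Lf * N + \<eta>1 * N)"
      using dx dy \<xi> Lf0 e10 by (intro add_mono mult_left_mono) auto
    finally have px: "norm (px (Suc k)) \<le> (\<xi> + Lf + \<eta>1) * N" by (simp add: algebra_simps)
    have "norm (py (Suc k)) \<le> norm (g' b - g' (yh k)) + norm (\<phi>2' b - \<phi>2' (yh k))"
    proof -
      have eq: "py (Suc k) = (g' b - g' (yh k)) - (\<phi>2' b - \<phi>2' (yh k))"
        unfolding py_def[OF k1] b_def by (simp add: algebra_simps)
      show ?thesis unfolding eq by (rule norm_triangle_ineq4)
    qed
    also have "\<dots> \<le> Lg * norm (b - yh k) + \<eta>2 * norm (b - yh k)"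
      using lipD[OF g'_lip, of b "yh k"] lipD[OF \<phi>2'_lip, of b "yh k"] by linarith
    also have "\<dots> \<le> Lg * N + \<eta>2 * N"
      using dy Lg0 e20 by (intro add_mono mult_left_mono) auto
    finally have py: "norm (py (Suc k)) \<le> (Lg + \<eta>2) * N" by (simp add: algebra_simps)
    have N0: "N \<ge> 0" unfolding N_def by simp
    have "norm (px (Suc k), py (Suc k)) \<le> norm (px (Suc k)) + norm (py (Suc k))" by (rule norm_Pair_le)
    also have "\<dots> \<le> (\<xi> + Lf + \<eta>1) * N + (Lg + \<eta>2) * N" using px py by linarith
    also have "\<dots> \<le> \<rho> * N" unfolding \<rho>_def using N0 by (simp add: algebra_simps)
    finally show ?thesis unfolding N_def a_def b_def .
  qed
  have "\<rho> > 0" unfolding \<rho>_def using \<xi> Lf0 Lg0 e10 e20 by simp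
  then show ?thesis using subd bound by blast
qed

end
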